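(* Let $p$ be a prime and let $a,b$ be integers with $0<a,b<p$. The following are equivalent: (1) $S^G_{a,b}$ is generated by 4 invariants, i.e. $|\mathrm{inv}_{a,b}|=4$ (equivalently, $\operatorname{codim}\ker\varphi_{a,b}=2$); (2) $\bigl(p-(a^{-1}b)_p\bigr)\bigl(p-(ab^{-1})_p\bigr)=p+1$.
   Context: Let $S=\mathbb{C}[x_1,x_2]$ with its standard grading, $\zeta=e^{2\pi i/p}$ and $G=\mathbb{Z}/p\mathbb{Z}=\langle\zeta\rangle$. For integers $a,b$, $G$ acts on $S$ by the $\mathbb{C}$-algebra automorphisms determined by $x_1\mapsto\zeta^a x_1$, $x_2\mapsto \zeta^b x_2$; $S^G_{a,b}$ denotes the ring of invariants. It is spanned by the invariant monomials $x_1^cx_2^d$, i.e. those with $ac+bd\equiv 0 \pmod p$. $\mathrm{inv}_{a,b}$ denotes the minimal set of monomial generators of $S^G_{a,b}$ as a $\mathbb{C}$-algebra: the nonconstant invariant monomials that are not a product of two nonconstant invariant monomials. "$S^G_{a,b}$ is generated by $k$ invariants" means $|\mathrm{inv}_{a,b}|=k$. Writing $\mathrm{inv}_{a,b}=\{z_0,\dots,z_n\}$ in lexicographic order with $x_1>x_2$, let $R=\mathbb{C}[y_0,\dots,y_n]$ with $\deg y_i=\deg z_i$ and let $\varphi_{a,b}:R\to S^G_{a,b}$ be the $\mathbb{C}$-algebra map $y_i\mapsto z_i$. For an integer $c$, $c_p$ denotes the unique integer $0\le c_p<p$ with $c\equiv c_p\pmod p$, and for $c$ not divisible by $p$, $c^{-1}$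 denotes the unique integer $0<c^{-1}<p$ with $cc^{-1}\equiv 1\pmod p$. *)

theory Defs
  imports "HOL-Number_Theory.Number_Theory"
begin

text \<open>A monomial x1^c x2^d is represented by its exponent pair (c,d).
  It is invariant under the action x1 -> zeta^a x1, x2 -> zeta^b x2 iff a c + b d = 0 mod p.\<close>

definition invariant_mono :: "int \<Rightarrow> int \<Rightarrow> int \<Rightarrow> nat \<times> nat \<Rightarrow> bool" where
  "invariant_mono p a b m \<longleftrightarrow> [a * int (fst m) + b * int (snd m) = 0] (mod p)"

definition nonconst_inv :: "int \<Rightarrow> int \<Rightarrow> int \<Rightarrow> (nat \<times> nat) set" where
  "nonconst_inv p a b = {m. invariant_mono p a b m \<and> m \<noteq> (0, 0)}"

definition inv_gens :: "int \<Rightarrow> int \<Rightarrow> int \<Rightarrow> (nat \<times> nat) set" where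
  "inv_gens p a b = {m \<in> nonconst_inv p a b.
      \<not> (\<exists>u \<in> nonconst_inv p a b. \<exists>v \<in> nonconst_inv p a b.
            fst m = fst u + fst v \<and> snd m = snd u + snd v)}"

definition inv_modp :: "int \<Rightarrow> int \<Rightarrow> int" where
  "inv_modp p c = (THE x. 0 < x \<and> x < p \<and> [c * x = 1] (mod p))"

end

theory Submission
  imports Defs
begin


definition NN :: "nat \<Rightarrow> nat \<Rightarrow> (nat \<times> nat) set" where
  "NN p q = {m. [int (fst m) = int q * int (snd m)] (mod int p) \<and> m \<noteq> (0, 0)}"

definition GG :: "nat \<Rightarrow> nat \<Rightarrow> (nat \<times> nat) set" where
  "GG p q = {m \<in> NN p q. \<not> (\<exists>u \<in> NN p q. \<exists>v \<in> NN p q.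
      fst m = fst u + fst v \<and> snd m = snd u + snd v)}"

lemma GG_notI:
  assumes "u \<in> NN p q" "m \<in> NN p q" "fst u \<le> fst m" "snd u \<le> snd m" "u \<noteq> m"
  shows "m \<notin> GG p q"
proof
  assume mg: "m \<in> GG p q"
  define v where "v = (fst m - fst u, snd m - snd u)"
  have c1: "[int (fst m) = int q * int (snd m)] (mod int p)"
    and c2: "[int (fst u) = int q * int (snd u)] (mod int p)"
    using assms(1,2) by (auto simp: NN_def)
  have "[int (fst m) - int (fst u) = int q * int (snd m) - int q * int (snd u)] (mod int p)"
    using cong_diff[OF c1 c2] .
  then have "[int (fst v) = int q * int (snd v)] (mod int p)"
    using assms(3,4) by (simp add: v_def of_nat_diff right_diff_distrib)
  moreover have "v \<noteq> (0,0)" using assms(3,4,5) by (auto simp: v_def prod_eq_iff)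
  ultimately have "v \<in> NN p q" by (simp add: NN_def)
  moreover have "fst m = fst u + fst v \<and> snd m = snd u + snd v" using assms(3,4) by (simp add: v_def)
  ultimately show False using mg assms(1) unfolding GG_def by blast
qed

lemma GG_I:
  assumes "m \<in> NN p q" "\<And>i j. (i, j) \<in> NN p q \<Longrightarrow> i \<le> fst m \<Longrightarrow> j \<le> snd m \<Longrightarrow> (i, j) = m"
  shows "m \<in> GG p q"
  unfolding GG_def
proof (safe)
  show "m \<in> NN p q" by fact
next
  fix u1 u2 v1 v2 assume u: "(u1,u2) \<in> NN p q" and v: "(v1,v2) \<in> NN p q"
    and e: "fst m = fst (u1,u2) + fst (v1,v2)" "snd m = snd (u1,u2) + snd (v1,v2)"
  then have "(u1,u2) = m" using assms(2)[of u1 u2] by simp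
  then have "(v1,v2) = (0,0)" using e by auto
  then show False using v by (simp add: NN_def)
qed

locale qsetup =
  fixes p q j0 :: nat
  assumes pr: "prime p" and q1: "1 \<le> q" and qp: "q < p" and j1: "1 \<le> j0" and jp: "j0 < p"
    and qj: "[int q * int j0 = 1] (mod int p)"
begin

lemma prI: "prime (int p)" using pr by simp

lemma cancel: "int p dvd int q * x \<Longrightarrow> int p dvd x"
proof -
  assume h: "int p dvd int q * x"
  have "\<not> int p dvd int q" using q1 qp by (auto dest: zdvd_imp_le)
  then show ?thesis using h prime_dvd_mult_iff[OF prI] by blast
qed

lemma small: "int p dvd x \<Longrightarrow> 0 < x \<Longrightarrow> x < int p \<Longrightarrow> False"
  by (auto dest: zdvd_imp_le)

lemma eqm: "0 \<le> x \<Longrightarrow> x < int p \<Longrightarrow> 0 \<le> y \<Longrightarrow> y < int p \<Longrightarrow> [x = y] (mod int p) \<Longrightarrow> x = y"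
  using cong_less_imp_eq_int by blast

lemma inNN: "(i, j) \<in> NN p q \<longleftrightarrow> int p dvd (int i - int q * int j) \<and> (i, j) \<noteq> (0,0)"
  by (simp add: NN_def cong_iff_dvd_diff)

lemma g1: "(p, 0) \<in> GG p q"
proof (rule GG_I)
  show "(p, 0) \<in> NN p q" using qp by (simp add: inNN)
  fix i j assume h: "(i, j) \<in> NN p q" "i \<le> fst (p, 0)" "j \<le> snd (p, 0)"
  then have "j = 0" by simp
  with h have "int p dvd int i" "i \<noteq> 0" "i \<le> p" by (auto simp: inNN)
  then have "i = p" using small[of "int i"] by force
  with \<open>j = 0\<close> show "(i, j) = (p, 0)" by simp
qed

lemma g2: "(0, p) \<in> GG p q"
proof (rule GG_I)
  show "(0, p) \<in> NN p q" using qp by (simp add: inNN)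
  fix i j assume h: "(i, j) \<in> NN p q" "i \<le> fst (0, p)" "j \<le> snd (0, p)"
  then have "i = 0" by simp
  with h have hh: "int p dvd int q * int j" "j \<noteq> 0" "j \<le> p" by (auto simp: inNN)
  then have "int p dvd int j" using cancel by blast
  then have "j = p" using hh using small[of "int j"] by force
  with \<open>i = 0\<close> show "(i, j) = (0, p)" by simp
qed

lemma g3: "(q, 1) \<in> GG p q"
proof (rule GG_I)
  show "(q, 1) \<in> NN p q" using q1 by (simp add: inNN)
  fix i j assume h: "(i, j) \<in> NN p q" "i \<le> fst (q, 1)" "j \<le> snd (q, 1)"
  then have "j = 0 \<or> j = 1" by auto
  then show "(i, j) = (q, 1)"
  proof
    assume "j = 0"
    with h have "int p dvd int i" "i \<noteq> 0" "i \<le> q" by (auto simp: inNN)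
    then show ?thesis using small[of "int i"] qp by force
  next
    assume j: "j = 1"
    with h have hh: "[int i = int q] (mod int p)" "i \<le> q" by (auto simp: inNN cong_iff_dvd_diff)
    have "int i = int q" by (rule eqm) (use hh qp in auto)
    with j show ?thesis by simp
  qed
qed

lemma g4: "(1, j0) \<in> GG p q"
proof (rule GG_I)
  show "(1, j0) \<in> NN p q" using qj by (simp add: NN_def cong_sym)
  fix i j assume h: "(i, j) \<in> NN p q" "i \<le> fst (1, j0)" "j \<le> snd (1, j0)"
  then have "i = 0 \<or> i = 1" by auto
  then show "(i, j) = (1, j0)"
  proof
    assume "i = 0"
    with h have hh: "int p dvd int q * int j" "j \<noteq> 0" "j \<le> j0" by (auto simp: inNN)
    then have "int p dvd int j" using cancel by blast
    then show ?thesis using small[of "int j"] hh jp by force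
  next
    assume i: "i = 1"
    with h have d1: "int p dvd 1 - int q * int j" "j \<le> j0" by (auto simp: inNN)
    have d2: "int p dvd int q * int j0 - 1" using qj by (simp add: cong_iff_dvd_diff)
    have "int p dvd int q * int j0 - 1 + (1 - int q * int j)" by (rule dvd_add[OF d2 d1(1)])
    then have "int p dvd int q * (int j0 - int j)" by (simp add: right_diff_distrib)
    then have "int p dvd (int j0 - int j)" by (rule cancel)
    then have "j = j0" using small[of "int j0 - int j"] \<open>j \<le> j0\<close> jp by force
    with i show ?thesis by simp
  qed
qed

lemma GG_NN: "m \<in> GG p q \<Longrightarrow> m \<in> NN p q" by (simp add: GG_def)

lemma s0: assumes "(i, 0) \<in> GG p q" shows "i = p"
proof -
  have "int p dvd int i" "i \<noteq> 0" using GG_NN[OF assms] by (auto simp: inNN)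
  then have "i \<ge> p" using small[of "int i"] by force
  moreover have "\<not> i > p"
    using GG_notI[of "(p,0)" p q "(i,0)"] g1 GG_NN[OF assms] GG_NN assms by auto
  ultimately show ?thesis by simp
qed

lemma f0: assumes "(0, j) \<in> GG p q" shows "j = p"
proof -
  have hh: "int p dvd int q * int j" "j \<noteq> 0" using GG_NN[OF assms] by (auto simp: inNN)
  then have "int p dvd int j" using cancel by blast
  then have "j \<ge> p" using hh using small[of "int j"] by force
  moreover have "\<not> j > p"
    using GG_notI[of "(0,p)" p q "(0,j)"] g2 GG_NN[OF assms] GG_NN assms by auto
  ultimately show ?thesis by simp
qed

lemma fq: assumes "(i, j) \<in> GG p q" "q \<le> i" "1 \<le> j" shows "(i, j) = (q, 1)"
  using GG_notI[of "(q,1)" p q "(i,j)"] g3 GG_NN[OF assms(1)] GG_NN assms by auto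

lemma fj: assumes "(i, j) \<in> GG p q" "1 \<le> i" "j0 \<le> j" shows "(i, j) = (1, j0)"
  using GG_notI[of "(1,j0)" p q "(i,j)"] g4 GG_NN[OF assms(1)] GG_NN assms by auto

lemma fin: "finite (GG p q)"
proof (rule finite_subset)
  show "GG p q \<subseteq> {0..p} \<times> {0..p}"
  proof
    fix m assume m: "m \<in> GG p q"
    obtain i j where mij: "m = (i, j)" by (cases m)
    have "\<not> i > p"
      using GG_notI[of "(p,0)" p q m] g1 GG_NN[OF m] GG_NN mij m by auto
    moreover have "\<not> j > p"
      using GG_notI[of "(0,p)" p q m] g2 GG_NN[OF m] GG_NN mij m by auto
    ultimately show "m \<in> {0..p} \<times> {0..p}" using mij by auto
  qed
qed simp

lemma case1: assumes "q = 1" shows "GG p q \<subseteq> {(p,0), (0,p), (1,1)}"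
proof
  fix m assume m: "m \<in> GG p q"
  obtain i j where mij: "m = (i, j)" by (cases m)
  show "m \<in> {(p,0), (0,p), (1,1)}"
  proof (cases "i = 0 \<or> j = 0")
    case True then show ?thesis using s0 f0 m mij by auto
  next
    case False then show ?thesis using fq[of i j] m mij assms by auto
  qed
qed

lemma case2: assumes "q * j0 = p + 1" shows "GG p q = {(p,0), (0,p), (q,1), (1,j0)}"
proof
  show "{(p,0), (0,p), (q,1), (1,j0)} \<subseteq> GG p q" using g1 g2 g3 g4 by auto
  show "GG p q \<subseteq> {(p,0), (0,p), (q,1), (1,j0)}"
  proof
    fix m assume m: "m \<in> GG p q"
    obtain i j where mij: "m = (i, j)" by (cases m)
    show "m \<in> {(p,0), (0,p), (q,1), (1,j0)}"
    proof (cases "i = 0 \<or> j = 0 \<or> q \<le> i \<or> j0 \<le> j")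
      case True
      show ?thesis
      proof (cases "i = 0")
        case True then show ?thesis using f0[of j] m mij by simp
      next
        case i0: False
        show ?thesis
        proof (cases "j = 0")
          case True then show ?thesis using s0[of i] m mij by simp
        next
          case False
          then have "q \<le> i \<or> j0 \<le> j" using True i0 by simp
          then show ?thesis
          proof
            assume "q \<le> i" then show ?thesis using fq[of i j] m mij False by simp
          next
            assume "j0 \<le> j" then show ?thesis using fj[of i j] m mij i0 by simp
          qed
        qed
      qed
    next
      case False
      then have ij: "1 \<le> i" "i < q" "1 \<le> j" "j < j0" by auto
      have d: "int p dvd int i - int q * int j" using GG_NN[OF m] mij by (simp add: inNN)
      have "q * j < q * j0" using ij q1 by simp
      then have "q * j \<le> p" using assms by simp
      moreover have "q * j \<noteq> p"
      proof
        assume "q * j = p"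
        then have "q dvd p" by (metis dvd_triv_left)
        then have "q = 1 \<or> q = p" using pr by (simp add: prime_nat_iff)
        then show False using qp ij by auto
      qed
      ultimately have lt1: "q * j < p" by simp
      have "q \<le> q * j" using ij by simp
      then have lt2: "i < q * j" using ij by linarith
      have e: "int q * int j = int (q * j)" by simp
      have lt1': "int (q * j) < int p" using lt1 by (simp only: of_nat_less_iff)
      have lt2': "int i < int (q * j)" using lt2 by (simp only: of_nat_less_iff)
      have "0 < int q * int j - int i" "int q * int j - int i < int p"
        using lt1' lt2' unfolding e by linarith+
      moreover have "int p dvd int q * int j - int i" using d by (simp add: dvd_diff_commute)
      ultimately show ?thesis using small by blast
    qed
  qed
qed

lemma case3: assumes "2 \<le> q" "q * j0 \<noteq> p + 1" shows "card (GG p q) \<ge> 5"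
proof -
  define k where "k = p div q + 1"
  define r where "r = q - p mod q"
  have dm: "q * (p div q) + p mod q = p" by simp
  have nd: "\<not> q dvd p" using pr assms(1) qp by (metis prime_nat_iff nat_less_le numeral_le_one_iff semiring_norm(69) order.trans not_le) 
  then have pm: "p mod q \<noteq> 0" by (simp add: dvd_eq_mod_eq_0)
  have pml: "p mod q < q" using assms(1) by simp
  have rk: "q * k = r + p"
  proof -
    have "q * k = q * (p div q) + q" unfolding k_def by simp
    then show ?thesis using dm pml unfolding r_def by linarith
  qed
  have r1: "1 \<le> r" "r < q" using pm pml unfolding r_def by auto
  have "0 < p div q" using qp assms(1) by (simp add: div_greater_zero_iff)
  then have k2: "2 \<le> k" unfolding k_def by simp
  have qdl: "q * (p div q) < p" using dm pm by linarith
  have p3: "3 \<le> p" using assms(1) qp by simp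
  have kp: "k < p"
  proof -
    have "p div q \<le> p div 2" using assms(1) by (simp add: div_le_mono2)
    also have "p div 2 < p - 1" using p3 by linarith
    finally show ?thesis unfolding k_def by simp
  qed
  have rn1: "r \<noteq> 1"
  proof
    assume "r = 1"
    then have "q * k = p + 1" using rk by simp
    then have "int q * int k = int p + 1" by (metis of_nat_add of_nat_mult of_nat_1)
    then have "int p dvd int q * int k - 1" by simp
    moreover have "int p dvd int q * int j0 - 1" using qj by (simp add: cong_iff_dvd_diff)
    ultimately have "int p dvd (int q * int k - 1) - (int q * int j0 - 1)" by (rule dvd_diff)
    then have "int p dvd int q * (int k - int j0)" by (simp add: right_diff_distrib)
    then have "int p dvd (int k - int j0)" by (rule cancel)
    then have "int p dvd (int k - int j0)" "int p dvd (int j0 - int k)" by (auto simp: dvd_diff_commute)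
    then have "k = j0" using small[of "int k - int j0"] small[of "int j0 - int k"] kp jp by force
    then show False using \<open>q * k = p + 1\<close> assms(2) by simp
  qed
  have g5: "(r, k) \<in> GG p q"
  proof (rule GG_I)
    have "int q * int k = int r + int p" using rk by (metis of_nat_add of_nat_mult)
    then have "int r - int q * int k = - int p" by simp
    then show "(r, k) \<in> NN p q" using k2 by (simp add: inNN)
    fix i j assume h: "(i, j) \<in> NN p q" "i \<le> fst (r, k)" "j \<le> snd (r, k)"
    then have d: "int p dvd int i - int q * int j" "(i,j) \<noteq> (0,0)" "i \<le> r" "j \<le> k" by (auto simp: inNN)
    consider "j = 0" | "j = k" | "0 < j" "j < k" using d by linarith
    then show "(i, j) = (r, k)"
    proof cases
      case 1
      then show ?thesis using d small[of "int i"] r1 qp by force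
    next
      case 2
      have "int q * int k = int r + int p" using rk by (metis of_nat_add of_nat_mult)
      then have eq: "int i - int q * int k = int i - int r - int p" by simp
      have "int p dvd int i - int q * int k" using d(1) 2 by simp
      then have "int p dvd int i - int r - int p" unfolding eq .
      then have "int p dvd int i - int r - int p + int p" using dvd_add dvd_refl by blast
      then have "[int i = int r] (mod int p)" by (simp add: cong_iff_dvd_diff)
      then have "int i = int r" by (rule eqm[rotated 4]) (use d r1 qp in auto)
      then show ?thesis using 2 by simp
    next
      case 3
      have "q * j \<le> q * (p div q)" using 3 unfolding k_def by simp
      then have lt1: "q * j < p" using qdl by linarith
      have "q \<le> q * j" using 3 by simp
      then have lt2: "i < q * j" using d r1 by linarith
      have e: "int q * int j = int (q * j)" by simp
      have lt1': "int (q * j) < int p" using lt1 by (simp only: of_nat_less_iff)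
      have lt2': "int i < int (q * j)" using lt2 by (simp only: of_nat_less_iff)
      have "0 < int q * int j - int i" "int q * int j - int i < int p"
        using lt1' lt2' unfolding e by linarith+
      moreover have "int p dvd int q * int j - int i" using d by (simp add: dvd_diff_commute)
      ultimately show ?thesis using small by blast
    qed
  qed
  have sub: "{(p,0), (0,p), (q,1), (1,j0), (r,k)} \<subseteq> GG p q" using g1 g2 g3 g4 g5 by auto
  have "card {(p,0), (0,p), (q,1), (1,j0), (r,k)} = 5"
    using r1 rn1 k2 qp assms(1) j1 p3 by auto
  then show ?thesis using card_mono[OF fin sub] by simp
qed

theorem main: "card (GG p q) = 4 \<longleftrightarrow> q * j0 = p + 1"
proof
  assume c: "card (GG p q) = 4"
  show "q * j0 = p + 1"
  proof (rule ccontr)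
    assume ne: "q * j0 \<noteq> p + 1"
    show False
    proof (cases "q = 1")
      case True
      have "card (GG p q) \<le> card {(p,0), (0,p), (1::nat,1::nat)}"
        using card_mono[OF _ case1[OF True]] by simp
      also have "\<dots> \<le> 3" using card_length[of "[(p,0), (0,p), (1::nat,1::nat)]"] by simp
      finally show False using c by simp
    next
      case False
      then show False using case3[OF _ ne] q1 c by simp
    qed
  qed
next
  assume e: "q * j0 = p + 1"
  have "q \<noteq> 1" using e jp by auto
  moreover have "j0 \<noteq> 1" using e qp by auto
  ultimately show "card (GG p q) = 4" using case2[OF e] qp q1 j1 by auto
qed

end


lemma inv_modp_prop:
  fixes p c :: int
  assumes pr: "prime p" and c: "0 < c" "c < p"
  shows "0 < inv_modp p c \<and> inv_modp p c < p \<and> [c * inv_modp p c = 1] (mod p)"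
proof -
  have p0: "p > 1" using pr prime_gt_1_int by blast
  have nd: "\<not> p dvd c" using c by (auto dest: zdvd_imp_le)
  then have "coprime c p" using pr prime_imp_coprime coprime_commute by blast
  then obtain x where x: "[c * x = 1] (mod p)" using cong_solve_coprime_int by blast
  define y where "y = x mod p"
  have y: "[c * y = 1] (mod p)"
  proof -
    have "[c * y = c * x] (mod p)" unfolding y_def by (simp add: cong_def mod_mult_right_eq)
    then show ?thesis using x cong_trans by blast
  qed
  have y0: "y \<noteq> 0" using y p0 by (auto simp: cong_def)
  have yr: "0 < y \<and> y < p" using y0 p0 unfolding y_def by (simp add: order_le_neq_trans)
  have uniq: "z = y" if "0 < z \<and> z < p \<and> [c * z = 1] (mod p)" for z
  proof -
    have "[c * z = c * y] (mod p)" using that y by (meson cong_sym cong_trans)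
    then have "p dvd c * (z - y)" by (simp add: cong_iff_dvd_diff right_diff_distrib)
    then have "p dvd z - y" using nd pr prime_dvd_mult_iff by blast
    then have "[z = y] (mod p)" by (simp add: cong_iff_dvd_diff)
    then show ?thesis using cong_less_imp_eq_int that yr by auto
  qed
  have "inv_modp p c = y" unfolding inv_modp_def
    by (rule the_equality) (use yr y uniq in auto)
  then show ?thesis using yr y by simp
qed

lemma reduce:
  fixes p a b :: int
  assumes pr: "prime p" and "0 < a" and "a < p" and "0 < b" and "b < p"
  shows "card (inv_gens p a b) = 4 \<longleftrightarrow>
         (p - (inv_modp p a * b) mod p) * (p - (a * inv_modp p b) mod p) = p + 1"
proof -
  define ai where "ai = inv_modp p a"
  define bi where "bi = inv_modp p b"
  have A: "0 < ai" "ai < p" "[a * ai = 1] (mod p)" using inv_modp_prop[OF pr assms(2,3)] ai_def by auto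
  have B: "0 < bi" "bi < p" "[b * bi = 1] (mod p)" using inv_modp_prop[OF pr assms(4,5)] bi_def by auto
  have p0: "p > 1" using pr prime_gt_1_int by blast
  define Q where "Q = p - (ai * b) mod p"
  define J where "J = p - (a * bi) mod p"
  have nd1: "\<not> p dvd ai * b"
  proof
    assume "p dvd ai * b"
    then have "p dvd ai \<or> p dvd b" by (simp add: prime_dvd_mult_iff[OF pr])
    then show False using A B assms by (auto dest: zdvd_imp_le)
  qed
  have nd2: "\<not> p dvd a * bi"
  proof
    assume "p dvd a * bi"
    then have "p dvd a \<or> p dvd bi" by (simp add: prime_dvd_mult_iff[OF pr])
    then show False using A B assms by (auto dest: zdvd_imp_le)
  qed
  have Qr: "1 \<le> Q" "Q < p"
  proof -
    have "(ai*b) mod p \<noteq> 0" using nd1 by (simp add: dvd_eq_mod_eq_0)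
    moreover have "(ai*b) mod p < p" "(ai*b) mod p \<ge> 0" using p0 by simp_all
    ultimately show "1 \<le> Q" "Q < p" unfolding Q_def by linarith+
  qed
  have Jr: "1 \<le> J" "J < p"
  proof -
    have "(a*bi) mod p \<noteq> 0" using nd2 by (simp add: dvd_eq_mod_eq_0)
    moreover have "(a*bi) mod p < p" "(a*bi) mod p \<ge> 0" using p0 by simp_all
    ultimately show "1 \<le> J" "J < p" unfolding J_def by linarith+
  qed
  have Qc: "p dvd Q + ai * b"
  proof -
    have "Q + ai * b = p * (1 + (ai * b) div p)" unfolding Q_def
      using div_mult_mod_eq[of "ai*b" p] by (simp add: algebra_simps)
    then show ?thesis by simp
  qed
  have Jc: "p dvd J + a * bi"
  proof -
    have "J + a * bi = p * (1 + (a * bi) div p)" unfolding J_def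
      using div_mult_mod_eq[of "a*bi" p] by (simp add: algebra_simps)
    then show ?thesis by simp
  qed
  have Ad: "p dvd a * ai - 1" and Bd: "p dvd b * bi - 1" using A B by (auto simp: cong_iff_dvd_diff)
  have QJ: "[Q * J = 1] (mod p)"
  proof -
    have e: "Q * J - 1 = (Q + ai * b) * J - ai * b * (J + a * bi) + (a * ai - 1) * (b * bi) + (b * bi - 1)"
      by (simp add: algebra_simps)
    have "p dvd (Q + ai * b) * J - ai * b * (J + a * bi) + (a * ai - 1) * (b * bi) + (b * bi - 1)"
      by (intro dvd_add dvd_diff dvd_mult2[OF Qc] dvd_mult[OF Jc] dvd_mult2[OF Ad] Bd)
    then show ?thesis unfolding cong_iff_dvd_diff e .
  qed
  have inv_iff: "[a * i + b * j = 0] (mod p) \<longleftrightarrow> [i = Q * j] (mod p)" for i j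
  proof
    assume "[a * i + b * j = 0] (mod p)"
    then have h: "p dvd a * i + b * j" by (simp add: cong_0_iff)
    have e: "i - Q * j = ai * (a * i + b * j) - (a * ai - 1) * i - (Q + ai * b) * j"
      by (simp add: algebra_simps)
    have "p dvd ai * (a * i + b * j) - (a * ai - 1) * i - (Q + ai * b) * j"
      by (intro dvd_diff dvd_mult[OF h] dvd_mult2[OF Ad] dvd_mult2[OF Qc])
    then show "[i = Q * j] (mod p)" unfolding cong_iff_dvd_diff e .
  next
    assume "[i = Q * j] (mod p)"
    then have h: "p dvd i - Q * j" by (simp add: cong_iff_dvd_diff)
    have e: "a * i + b * j = a * (i - Q * j) + a * j * (Q + ai * b) - (a * ai - 1) * (b * j)"
      by (simp add: algebra_simps)
    have "p dvd a * (i - Q * j) + a * j * (Q + ai * b) - (a * ai - 1) * (b * j)"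
      by (intro dvd_diff dvd_add dvd_mult[OF h] dvd_mult[OF Qc] dvd_mult2[OF Ad])
    then show "[a * i + b * j = 0] (mod p)" unfolding cong_0_iff e .
  qed
  interpret qsetup "nat p" "nat Q" "nat J"
    by unfold_locales (use pr Qr Jr QJ p0 in auto)
  have NNeq: "nonconst_inv p a b = NN (nat p) (nat Q)"
    proof -
    have "int (nat Q) = Q" "int (nat p) = p" using Qr p0 by auto
    then show ?thesis unfolding nonconst_inv_def NN_def invariant_mono_def using inv_iff by simp
  qed
  have "inv_gens p a b = GG (nat p) (nat Q)"
    unfolding inv_gens_def GG_def NNeq by simp
  then have "card (inv_gens p a b) = 4 \<longleftrightarrow> nat Q * nat J = nat p + 1" using main by simp
  also have "\<dots> \<longleftrightarrow> int (nat Q * nat J) = int (nat p + 1)" by (rule of_nat_eq_iff[symmetric])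
  also have "\<dots> \<longleftrightarrow> Q * J = p + 1" using Qr Jr p0 by (simp add: add.commute)
  finally show ?thesis unfolding Q_def J_def ai_def bi_def .
qed


theorem theorem1p2:
  fixes p a b :: int
  assumes "prime p" and "0 < a" and "a < p" and "0 < b" and "b < p"
  shows "card (inv_gens p a b) = 4 \<longleftrightarrow>
         (p - (inv_modp p a * b) mod p) * (p - (a * inv_modp p b) mod p) = p + 1"
  using reduce[OF assms] .

end
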